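(* Let $A$ be a finite tree rooted at $e$, with all arcs directed from the root towards the leaves, and let $R\subseteq V(A)$ be a set of destinations containing all leaves of $A$. Let $u\neq e$ be a vertex of $A$ having $\ell$ children $u_1,\dots,u_\ell$, and let $D\subseteq V(A)$. If $D$ is sub-optimal for $u$, then $D$ is sub-optimal for $u_i$ for every $i$, $1\le i\le\ell$.
   Context: Setting (multicast with diffusing nodes): $A$ is a multicast tree for a request $(e,R)$: a tree rooted at the source $e$, arcs directed away from $e$, whose leaves lie in the destination set $R$. A set $D\subseteq V(A)$ is a set of diffusing (branching) nodes. The solution $\mathcal{S}(D)$ is a set of directed paths in $A$ such that: every node of $R$ is the final extremity of exactly one path; every node of $D$ is the final extremity of at most one path; the origin of each path is either $e$ or a node of $D$ which is itself the final extremity of some path; a node of $D$ lies on a path only as its origin or final extremity. As in the paper, $\mathcal{S}(D)$ is taken to be the solution in which each vertex $x\neq e$ of $R\cup D$ is the final extremity of exactly one path, whose origin is the nearest proper ancestor of $x$ belonging to $D\cup\{e\}$. For a vertex $u$, $A^u$ is the subtree of $A$ rooted at $u$, and for $u\neq e$, $a^u$ is the arc joining the parent of $u$ to $u$. The path number $\mathrm{pn}(u)$ is the number of paths of $\mathcal{S}(D)$ that pass through $u$ or terminate at $u$. The window of $\mathcal{S}(D)$ on arc $a^u$ is the triple $(\mathrm{pn}(u),\ |D\cap V(A^u)|,\ \mathrm{load})$, where $\mathrm{load}=\sum_{w\in V(A^u)}\mathrm{pn}(w)$ is the load of $\mathcal{S}(D)$ in $A^u$ (the number of pairs (path, arc)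 with the path using the arc, over the arcs of $A^u$ together with $a^u$). Sub-optimality: $D$ is sub-optimal for a vertex $u\neq e$ (i.e. for $A^u$) iff for every $D'\subseteq V(A)$ whose window $(b',d',\mathrm{load}')$ on $a^u$ satisfies $b'=b$ and $d'=d$, one has $\mathrm{load}\le\mathrm{load}'$, where $(b,d,\mathrm{load})$ is the window of $\mathcal{S}(D)$ on $a^u$. *)

theory Defs
  imports Main
begin

text \<open>A rooted tree with vertex set V, root e, and parent function par
  (par v is the parent of v for v in V, v distinct from e; par e is irrelevant).
  Arcs are directed from the parent to the child.\<close>

definition arcs :: "'a set \<Rightarrow> ('a \<Rightarrow> 'a) \<Rightarrow> 'a \<Rightarrow> ('a \<times> 'a) set" where
  "arcs V par e = {(par v, v) | v. v \<in> V \<and> v \<noteq> e}"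

definition rooted_tree :: "'a set \<Rightarrow> ('a \<Rightarrow> 'a) \<Rightarrow> 'a \<Rightarrow> bool" where
  "rooted_tree V par e \<longleftrightarrow> finite V \<and> e \<in> V \<and> (\<forall>v \<in> V - {e}. par v \<in> V)
     \<and> (\<forall>v \<in> V. (e, v) \<in> (arcs V par e)\<^sup>*)"

definition subtree :: "'a set \<Rightarrow> ('a \<Rightarrow> 'a) \<Rightarrow> 'a \<Rightarrow> 'a \<Rightarrow> 'a set" where
  "subtree V par e u = {w. (u, w) \<in> (arcs V par e)\<^sup>*}"

definition children :: "'a set \<Rightarrow> ('a \<Rightarrow> 'a) \<Rightarrow> 'a \<Rightarrow> 'a \<Rightarrow> 'a set" where
  "children V par e u = {v \<in> V. v \<noteq> e \<and> par v = u}"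

definition leaves :: "'a set \<Rightarrow> ('a \<Rightarrow> 'a) \<Rightarrow> 'a \<Rightarrow> 'a set" where
  "leaves V par e = {v \<in> V. children V par e v = {}}"

text \<open>Origin of the path of S(D) ending at x (x distinct from e): the nearest
  proper ancestor of x belonging to D \<union> {e}.\<close>
definition orig :: "('a \<Rightarrow> 'a) \<Rightarrow> 'a \<Rightarrow> 'a set \<Rightarrow> 'a \<Rightarrow> 'a" where
  "orig par e D x = (par ^^ (LEAST k. k \<ge> 1 \<and> (par ^^ k) x \<in> D \<union> {e})) x"

text \<open>Path number pn(w) of S(D): the number of paths of S(D) that pass through w
  or terminate at w, i.e. that use the arc a^w.  The path ending at x runs from
  orig x down to x; it uses a^w iff x is in A^w and
  orig x is a proper ancestor of w.\<close>
definition path_number :: "'a set \<Rightarrow> ('a \<Rightarrow> 'a) \<Rightarrow> 'a \<Rightarrow> 'a set \<Rightarrow> 'a set \<Rightarrow> 'a \<Rightarrow> nat" where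
  "path_number V par e R D w =
     card {x \<in> (R \<union> D) - {e}. x \<in> subtree V par e w \<and>
                              (orig par e D x, w) \<in> (arcs V par e)\<^sup>+}"

definition load :: "'a set \<Rightarrow> ('a \<Rightarrow> 'a) \<Rightarrow> 'a \<Rightarrow> 'a set \<Rightarrow> 'a set \<Rightarrow> 'a \<Rightarrow> nat" where
  "load V par e R D u = (\<Sum>w \<in> subtree V par e u. path_number V par e R D w)"

definition window :: "'a set \<Rightarrow> ('a \<Rightarrow> 'a) \<Rightarrow> 'a \<Rightarrow> 'a set \<Rightarrow> 'a set \<Rightarrow> 'a \<Rightarrow> nat \<times> nat \<times> nat" where
  "window V par e R D u =
     (path_number V par e R D u, card (D \<inter> subtree V par e u), load V par e R D u)"

definition sub_optimal :: "'a set \<Rightarrow> ('a \<Rightarrow> 'a) \<Rightarrow> 'a \<Rightarrow> 'a set \<Rightarrow> 'a set \<Rightarrow> 'a \<Rightarrow> bool" where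
  "sub_optimal V par e R D u \<longleftrightarrow>
     (\<forall>D' \<subseteq> V.
        (case window V par e R D u of (b, d, l) \<Rightarrow>
          case window V par e R D' u of (b', d', l') \<Rightarrow>
            (b' = b \<and> d' = d \<longrightarrow> l \<le> l')))"

end

theory Submission
  imports Defs
begin

definition dep :: "('a \<Rightarrow> 'a) \<Rightarrow> 'a \<Rightarrow> 'a \<Rightarrow> nat" where
  "dep par e v = (LEAST k. (par ^^ k) v = e)"

definition noD :: "('a \<times> 'a) set \<Rightarrow> 'a set \<Rightarrow> 'a \<Rightarrow> 'a \<Rightarrow> bool" where
  "noD T D x w = (\<forall>y. (w,y) \<in> T\<^sup>* \<longrightarrow> (y,x) \<in> T\<^sup>+ \<longrightarrow> y \<notin> D)"

lemma lin_anc: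
  assumes "(a,x) \<in> (arcs V par e)\<^sup>*" "(b,x) \<in> (arcs V par e)\<^sup>*"
  shows "(a,b) \<in> (arcs V par e)\<^sup>* \<or> (b,a) \<in> (arcs V par e)\<^sup>*"
  using assms
proof (induction arbitrary: b rule: rtrancl_induct)
  case base
  then show ?case by simp
next
  case (step y z)
  from step.prems show ?case
  proof (cases rule: rtranclE)
    case base
    then show ?thesis using step.hyps by auto
  next
    case (step y')
    then have "y' = y" using step.hyps(2) by (auto simp: arcs_def)
    then show ?thesis using step.IH step by auto
  qed
qed

context
  fixes V :: "'a set" and par e
  assumes rt: "rooted_tree V par e"
begin

abbreviation "T \<equiv> arcs V par e"
abbreviation "dp \<equiv> dep par e"

lemma arcsD: "(a,b) \<in> T \<Longrightarrow> b \<in> V \<and> b \<noteq> e \<and> a = par b"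
  by (auto simp: arcs_def)

lemma arcsI: "b \<in> V \<Longrightarrow> b \<noteq> e \<Longrightarrow> (par b, b) \<in> T"
  by (auto simp: arcs_def)

lemma no_into_e: "(a,e) \<in> T\<^sup>* \<Longrightarrow> a = e"
  by (erule rtranclE) (auto dest: arcsD)

lemma rt_V: "(a,b) \<in> T\<^sup>* \<Longrightarrow> a \<in> V \<Longrightarrow> b \<in> V"
  by (induction rule: rtrancl_induct) (auto dest: arcsD)

lemma reach_e: "v \<in> V \<Longrightarrow> \<exists>k. (par ^^ k) v = e"
proof -
  assume "v \<in> V"
  then have "(e,v) \<in> T\<^sup>*" using rt by (auto simp: rooted_tree_def)
  then show ?thesis
  proof (induction rule: rtrancl_induct)
    case base
    then show ?case by (rule exI[of _ 0]) simp
  next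
    case (step y z)
    then obtain k where "(par ^^ k) y = e" by auto
    moreover have "y = par z" using step arcsD by auto
    ultimately have "(par ^^ Suc k) z = e" by (simp only: funpow_Suc_right comp_def)
    then show ?case by blast
  qed
qed

lemma dep_at: "v \<in> V \<Longrightarrow> (par ^^ dp v) v = e"
  unfolding dep_def using reach_e by (rule LeastI_ex)

lemma dep_e: "dp e = 0"
  unfolding dep_def by simp

lemma dep_par: "v \<in> V \<Longrightarrow> v \<noteq> e \<Longrightarrow> dp v = Suc (dp (par v))"
proof -
  assume v: "v \<in> V" "v \<noteq> e"
  have pv: "par v \<in> V" using rt v by (auto simp: rooted_tree_def)
  have a: "(par ^^ dp v) v = e" using dep_at v by simp
  have "dp v \<noteq> 0" using a v by (metis funpow_0)
  then obtain n where n: "dp v = Suc n" by (cases "dp v") auto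
  then have "(par ^^ n) (par v) = e" using a by (simp only: funpow_Suc_right comp_def)
  then have "dp (par v) \<le> n" unfolding dep_def by (rule Least_le)
  moreover have "(par ^^ Suc (dp (par v))) v = e" using dep_at[OF pv]
    by (simp only: funpow_Suc_right comp_def)
  then have "dp v \<le> Suc (dp (par v))" unfolding dep_def by (rule Least_le)
  ultimately show ?thesis using n by simp
qed

lemma dep_arc: "(a,b) \<in> T \<Longrightarrow> dp b = Suc (dp a)"
  using arcsD dep_par by blast

lemma dep_trancl: "(a,b) \<in> T\<^sup>+ \<Longrightarrow> dp a < dp b"
  by (induction rule: trancl_induct) (auto dest: dep_arc)

lemma dep_rtrancl: "(a,b) \<in> T\<^sup>* \<Longrightarrow> dp a \<le> dp b"
  by (auto dest!: rtranclD dep_trancl)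

lemma acyc: "(a,b) \<in> T\<^sup>* \<Longrightarrow> (b,a) \<in> T\<^sup>* \<Longrightarrow> a = b"
  by (metis dep_rtrancl dep_trancl leD rtranclD)

lemma chain: "x \<in> V \<Longrightarrow> k \<le> dp x \<Longrightarrow>
   (par ^^ k) x \<in> V \<and> ((par ^^ k) x, x) \<in> T\<^sup>* \<and> dp ((par ^^ k) x) + k = dp x"
proof (induction k)
  case 0
  then show ?case by simp
next
  case (Suc k)
  then have IH: "(par ^^ k) x \<in> V" "((par ^^ k) x, x) \<in> T\<^sup>*" "dp ((par ^^ k) x) + k = dp x"
    by auto
  have ne: "(par ^^ k) x \<noteq> e" using IH(3) Suc.prems dep_e by auto
  have arc: "((par ^^ Suc k) x, (par ^^ k) x) \<in> T" using arcsI[OF IH(1) ne] by simp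
  show ?case using arc IH dep_arc[OF arc] arcsD[OF arc] rt ne
    by (auto simp: rooted_tree_def)
qed

lemma anc_chain: "(y,x) \<in> T\<^sup>* \<Longrightarrow> \<exists>j. y = (par ^^ j) x \<and> dp y + j = dp x"
proof (induction rule: converse_rtrancl_induct)
  case base
  then show ?case by (rule exI[of _ 0]) simp
next
  case (step y z)
  then obtain j where j: "z = (par ^^ j) x" "dp z + j = dp x" by auto
  have "y = (par ^^ Suc j) x" using j arcsD[OF step(1)] by simp
  moreover have "dp y + Suc j = dp x" using j dep_arc[OF step(1)] by simp
  ultimately show ?case by blast
qed

lemma orig_props:
  assumes x: "x \<in> V" "x \<noteq> e"
  shows "(orig par e D x, x) \<in> T\<^sup>+ \<and> orig par e D x \<in> D \<union> {e} \<and>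
    (\<forall>y. (y,x) \<in> T\<^sup>+ \<longrightarrow> (orig par e D x, y) \<in> T\<^sup>+ \<longrightarrow> y \<notin> D \<union> {e})"
proof -
  define P where "P k = (k \<ge> 1 \<and> (par ^^ k) x \<in> D \<union> {e})" for k
  define m where "m = (LEAST k. P k)"
  have o: "orig par e D x = (par ^^ m) x" unfolding orig_def m_def P_def by simp
  have dx: "dp x \<ge> 1" using dep_par x by simp
  have "P (dp x)" using dx dep_at[OF x(1)] unfolding P_def by simp
  then have Pm: "P m" and mle: "m \<le> dp x" unfolding m_def by (auto intro: LeastI Least_le)
  have c: "((par ^^ m) x, x) \<in> T\<^sup>*" "dp ((par ^^ m) x) + m = dp x"
    using chain[OF x(1) mle] by auto
  have "(par ^^ m) x \<noteq> x" using c(2) Pm unfolding P_def by auto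
  then have t: "((par ^^ m) x, x) \<in> T\<^sup>+" using c(1) by (auto dest: rtranclD)
  have "\<forall>y. (y,x) \<in> T\<^sup>+ \<longrightarrow> ((par ^^ m) x, y) \<in> T\<^sup>+ \<longrightarrow> y \<notin> D \<union> {e}"
  proof (intro allI impI)
    fix y assume y: "(y,x) \<in> T\<^sup>+" "((par ^^ m) x, y) \<in> T\<^sup>+"
    obtain j where j: "y = (par ^^ j) x" "dp y + j = dp x"
      using anc_chain[OF trancl_into_rtrancl[OF y(1)]] by auto
    have "dp y < dp x" using dep_trancl[OF y(1)] .
    then have j1: "j \<ge> 1" using j by simp
    have "dp ((par ^^ m) x) < dp y" using dep_trancl[OF y(2)] .
    then have "j < m" using j c by simp
    then have "\<not> P j" unfolding m_def by (rule not_less_Least)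
    then show "y \<notin> D \<union> {e}" using j j1 unfolding P_def by auto
  qed
  then show ?thesis using o t Pm unfolding P_def by auto
qed

lemma char:
  assumes x: "x \<in> V" "x \<noteq> e" and w: "w \<noteq> e" and wx: "(w,x) \<in> T\<^sup>*"
  shows "(orig par e D x, w) \<in> T\<^sup>+ \<longleftrightarrow> noD T D x w"
proof -
  define oo where "oo = orig par e D x"
  have F: "(oo,x) \<in> T\<^sup>+" "oo \<in> D \<union> {e}"
    "\<And>y. (y,x) \<in> T\<^sup>+ \<Longrightarrow> (oo,y) \<in> T\<^sup>+ \<Longrightarrow> y \<notin> D \<union> {e}"
    unfolding oo_def using orig_props[OF x, of D] by auto
  show ?thesis unfolding oo_def[symmetric] noD_def
  proof
    assume ow: "(oo,w) \<in> T\<^sup>+"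
    show "\<forall>y. (w,y) \<in> T\<^sup>* \<longrightarrow> (y,x) \<in> T\<^sup>+ \<longrightarrow> y \<notin> D"
    proof (intro allI impI)
      fix y assume "(w,y) \<in> T\<^sup>*" "(y,x) \<in> T\<^sup>+"
      moreover have "(oo,y) \<in> T\<^sup>+" using ow \<open>(w,y) \<in> T\<^sup>*\<close> by (rule trancl_rtrancl_trancl)
      ultimately show "y \<notin> D" using F(3) by blast
    qed
  next
    assume H: "\<forall>y. (w,y) \<in> T\<^sup>* \<longrightarrow> (y,x) \<in> T\<^sup>+ \<longrightarrow> y \<notin> D"
    have "(oo,w) \<in> T\<^sup>* \<or> (w,oo) \<in> T\<^sup>*"
      using lin_anc[OF trancl_into_rtrancl[OF F(1)] wx] .
    moreover have "(w,oo) \<notin> T\<^sup>*"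
    proof
      assume "(w,oo) \<in> T\<^sup>*"
      then have "oo \<notin> D" using H F(1) by blast
      then have "oo = e" using F(2) by blast
      then show False using \<open>(w,oo) \<in> T\<^sup>*\<close> no_into_e w by blast
    qed
    ultimately show "(oo,w) \<in> T\<^sup>+" by (auto dest: rtranclD)
  qed
qed

definition PS :: "'a set \<Rightarrow> 'a set \<Rightarrow> 'a \<Rightarrow> 'a set" where
  "PS R D w = {x \<in> (R \<union> D) - {e}. (w,x) \<in> T\<^sup>* \<and> noD T D x w}"

lemma pn_eq:
  assumes "R \<subseteq> V" "D \<subseteq> V" "w \<noteq> e"
  shows "path_number V par e R D w = card (PS R D w)"
proof -
  have "{x \<in> (R \<union> D) - {e}. x \<in> subtree V par e w \<and> (orig par e D x, w) \<in> T\<^sup>+}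
      = PS R D w"
    unfolding PS_def subtree_def using char assms by blast
  then show ?thesis unfolding path_number_def by simp
qed

lemma PS_loc:
  assumes "D1 \<inter> subtree V par e w = D2 \<inter> subtree V par e w"
  shows "PS R D1 w = PS R D2 w"
proof -
  have "\<And>x. (w,x) \<in> T\<^sup>* \<Longrightarrow> noD T D1 x w = noD T D2 x w"
    using assms unfolding noD_def subtree_def by blast
  moreover have "\<And>x. (w,x) \<in> T\<^sup>* \<Longrightarrow> x \<in> D1 \<longleftrightarrow> x \<in> D2"
    using assms unfolding subtree_def by blast
  ultimately show ?thesis unfolding PS_def by blast
qed

lemma subtree_V: "w \<in> V \<Longrightarrow> subtree V par e w \<subseteq> V"
  unfolding subtree_def using rt_V by blast

lemma main_step:
  assumes R: "R \<subseteq> V" and u: "u \<in> V" "u \<noteq> e" and D: "D \<subseteq> V" and D': "D' \<subseteq> V"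
    and v: "v \<in> V" "v \<noteq> e" "par v = u"
    and h1: "path_number V par e R D' v = path_number V par e R D v"
    and h2: "card (D' \<inter> subtree V par e v) = card (D \<inter> subtree V par e v)"
    and h3: "load V par e R D' v < load V par e R D v"
  defines "D'' \<equiv> (D - subtree V par e v) \<union> (D' \<inter> subtree V par e v)"
  shows "D'' \<subseteq> V \<and> path_number V par e R D'' u = path_number V par e R D u
    \<and> card (D'' \<inter> subtree V par e u) = card (D \<inter> subtree V par e u)
    \<and> load V par e R D'' u < load V par e R D u"
proof -
  let ?A = "subtree V par e"
  have D''V: "D'' \<subseteq> V" using D D' unfolding D''_def by auto
  have uv: "(u,v) \<in> T" using arcsI[OF v(1,2)] v(3) by simp
  have Av_sub: "?A v \<subseteq> ?A u" unfolding subtree_def using uv by auto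
  have finA: "finite (?A u)" using subtree_V[OF u(1)] rt finite_subset
    unfolding rooted_tree_def by blast
  have u_notin: "u \<notin> ?A v"
  proof
    assume "u \<in> ?A v"
    then have "(v,u) \<in> T\<^sup>*" unfolding subtree_def by simp
    then have "u = v" using acyc uv by blast
    then show False using dep_arc[OF uv] by simp
  qed
  have anc_split: "y = u \<or> y \<in> ?A v"
    if x: "x \<in> ?A v" and y: "(u,y) \<in> T\<^sup>*" "(y,x) \<in> T\<^sup>+" for x y
  proof -
    have vx: "(v,x) \<in> T\<^sup>*" using x unfolding subtree_def by simp
    from lin_anc[OF trancl_into_rtrancl[OF y(2)] vx]
    show ?thesis
    proof
      assume "(y,v) \<in> T\<^sup>*"
      then show ?thesis
      proof (cases rule: rtranclE)
        case base then show ?thesis unfolding subtree_def by simp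
      next
        case (step z)
        then have "z = u" using arcsD v(3) by blast
        then have "(y,u) \<in> T\<^sup>*" using step by simp
        then show ?thesis using acyc y(1) by blast
      qed
    next
      assume "(v,y) \<in> T\<^sup>*" then show ?thesis unfolding subtree_def by simp
    qed
  qed
  have ne_sub: "w \<noteq> e" if "w \<in> ?A v" for w
    using that no_into_e v(2) unfolding subtree_def by blast
  have PSu_v: "PS R DD u \<inter> ?A v = (if u \<in> DD then {} else PS R DD v)" for DD
  proof -
    have "x \<in> PS R DD u \<longleftrightarrow> u \<notin> DD \<and> x \<in> PS R DD v" if x: "x \<in> ?A v" for x
    proof
      assume a: "x \<in> PS R DD u"
      have vx: "(v,x) \<in> T\<^sup>*" using x unfolding subtree_def by simp
      have ux: "(u,x) \<in> T\<^sup>+" using uv vx by (rule rtrancl_into_trancl2)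
      have "u \<notin> DD" using a ux unfolding PS_def noD_def by blast
      moreover have "noD T DD x v" unfolding noD_def
      proof (intro allI impI)
        fix y assume "(v,y) \<in> T\<^sup>*" "(y,x) \<in> T\<^sup>+"
        moreover have "(u,y) \<in> T\<^sup>*" using uv \<open>(v,y) \<in> T\<^sup>*\<close>
          by (rule converse_rtrancl_into_rtrancl)
        moreover have "\<forall>y. (u,y) \<in> T\<^sup>* \<longrightarrow> (y,x) \<in> T\<^sup>+ \<longrightarrow> y \<notin> DD"
          using a unfolding PS_def noD_def by simp
        ultimately show "y \<notin> DD" by simp
      qed
      ultimately show "u \<notin> DD \<and> x \<in> PS R DD v" using a vx unfolding PS_def by blast
    next
      assume a: "u \<notin> DD \<and> x \<in> PS R DD v"
      have "(u,x) \<in> T\<^sup>*" using x Av_sub unfolding subtree_def by blast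
      moreover have "noD T DD x u" unfolding noD_def
      proof (intro allI impI)
        fix y assume "(u,y) \<in> T\<^sup>*" "(y,x) \<in> T\<^sup>+"
        then have "y = u \<or> y \<in> ?A v" using anc_split x by blast
        then show "y \<notin> DD" using a \<open>(y,x) \<in> T\<^sup>+\<close>
          unfolding PS_def noD_def subtree_def by blast
      qed
      ultimately show "x \<in> PS R DD u" using a unfolding PS_def by blast
    qed
    moreover have "PS R DD v \<subseteq> ?A v" unfolding PS_def subtree_def by blast
    ultimately show ?thesis by auto
  qed
  have PSu_out: "PS R D'' u - ?A v = PS R D u - ?A v"
  proof -
    have "x \<in> PS R D'' u \<longleftrightarrow> x \<in> PS R D u" if x: "x \<notin> ?A v" for x
    proof -
      have "x \<in> D'' \<longleftrightarrow> x \<in> D" using x unfolding D''_def by blast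
      moreover have "noD T D'' x u \<longleftrightarrow> noD T D x u"
      proof -
        have "y \<notin> ?A v" if yx: "(y,x) \<in> T\<^sup>+" for y
        proof
          assume "y \<in> ?A v"
          then have "(v,y) \<in> T\<^sup>*" unfolding subtree_def by simp
          then have "(v,x) \<in> T\<^sup>*" using trancl_into_rtrancl[OF yx] by (rule rtrancl_trans)
          then show False using x unfolding subtree_def by simp
        qed
        then show ?thesis unfolding noD_def D''_def by blast
      qed
      ultimately show ?thesis unfolding PS_def by blast
    qed
    then show ?thesis by blast
  qed
  have finPS: "finite (PS R DD w)" if "DD \<subseteq> V" for DD w
    using R that rt finite_subset unfolding PS_def rooted_tree_def
    by (metis (no_types, lifting) Diff_subset le_sup_iff mem_Collect_eq subsetI)
  have pnu: "path_number V par e R D'' u = path_number V par e R D u"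
  proof -
    have uD: "u \<in> D'' \<longleftrightarrow> u \<in> D" using u_notin unfolding D''_def by blast
    have pv: "card (PS R D'' v) = card (PS R D v)"
    proof -
      have "D'' \<inter> ?A v = D' \<inter> ?A v" unfolding D''_def by blast
      then have "PS R D'' v = PS R D' v" by (rule PS_loc)
      then show ?thesis using h1 pn_eq[OF R D' v(2)] pn_eq[OF R D v(2)] by simp
    qed
    have "card (PS R D'' u) = card (PS R D'' u \<inter> ?A v) + card (PS R D'' u - ?A v)"
      using finPS[OF D''V] by (rule card_Int_Diff)
    also have "\<dots> = card (PS R D u \<inter> ?A v) + card (PS R D u - ?A v)"
      using PSu_v[of D''] PSu_v[of D] uD pv PSu_out by simp
    also have "\<dots> = card (PS R D u)"
      using finPS[OF D] by (rule card_Int_Diff[symmetric])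
    finally show ?thesis using pn_eq[OF R D''V u(2)] pn_eq[OF R D u(2)] by simp
  qed
  have cardu: "card (D'' \<inter> ?A u) = card (D \<inter> ?A u)"
  proof -
    have f1: "finite (D'' \<inter> ?A u)" "finite (D \<inter> ?A u)" using finA by auto
    have "D'' \<inter> ?A u \<inter> ?A v = D' \<inter> ?A v" "D'' \<inter> ?A u - ?A v = D \<inter> ?A u - ?A v"
      "D \<inter> ?A u \<inter> ?A v = D \<inter> ?A v"
      using Av_sub unfolding D''_def by auto
    then show ?thesis using card_Int_Diff[OF f1(1), of "?A v"] card_Int_Diff[OF f1(2), of "?A v"] h2
      by simp
  qed
  have pnw: "path_number V par e R D'' w = path_number V par e R D w"
    if w: "w \<in> ?A u - ?A v" for w
  proof (cases "w = u")
    case True then show ?thesis using pnu by simp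
  next
    case False
    have uw: "(u,w) \<in> T\<^sup>*" using w unfolding subtree_def by simp
    have wne: "w \<noteq> e" using uw no_into_e u(2) by blast
    have disj: "?A w \<inter> ?A v = {}"
    proof (rule ccontr)
      assume "?A w \<inter> ?A v \<noteq> {}"
      then obtain z where "(w,z) \<in> T\<^sup>*" "(v,z) \<in> T\<^sup>*" unfolding subtree_def by blast
      from lin_anc[OF this] show False
      proof
        assume wv: "(w,v) \<in> T\<^sup>*"
        then show False
        proof (cases rule: rtranclE)
          case base then show False using w unfolding subtree_def by simp
        next
          case (step y)
          then have "y = u" using arcsD v(3) by blast
          then have "(w,u) \<in> T\<^sup>*" using step by simp
          then show False using acyc uw False by blast
        qed
      next
        assume "(v,w) \<in> T\<^sup>*" then show False using w unfolding subtree_def by simp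
      qed
    qed
    have "D'' \<inter> ?A w = D \<inter> ?A w" using disj unfolding D''_def by blast
    then have "PS R D'' w = PS R D w" by (rule PS_loc)
    then show ?thesis using pn_eq[OF R D''V wne] pn_eq[OF R D wne] by simp
  qed
  have pnv: "path_number V par e R D'' w = path_number V par e R D' w"
    if w: "w \<in> ?A v" for w
  proof -
    have "?A w \<subseteq> ?A v" using w unfolding subtree_def by auto
    then have "D'' \<inter> ?A w = D' \<inter> ?A w" unfolding D''_def by blast
    then have "PS R D'' w = PS R D' w" by (rule PS_loc)
    then show ?thesis using pn_eq[OF R D''V ne_sub[OF w]] pn_eq[OF R D' ne_sub[OF w]] by simp
  qed
  have ld: "load V par e R DD u = sum (path_number V par e R DD) (?A u - ?A v) + load V par e R DD v"
    for DD unfolding load_def using sum.subset_diff[OF Av_sub finA] by simp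
  have "load V par e R D'' u = sum (path_number V par e R D) (?A u - ?A v) + load V par e R D' v"
    unfolding ld[of D''] using pnw pnv unfolding load_def by simp
  also have "\<dots> < load V par e R D u" using ld[of D] h3 by simp
  finally show ?thesis using D''V pnu cardu by simp
qed

end

theorem mainTheorem3:
  fixes V :: "'a set" and par :: "'a \<Rightarrow> 'a" and e u :: 'a and R D :: "'a set"
  assumes "rooted_tree V par e"
    and "R \<subseteq> V" and "leaves V par e \<subseteq> R"
    and "u \<in> V" and "u \<noteq> e"
    and "D \<subseteq> V"
    and "sub_optimal V par e R D u"
  shows "\<forall>v \<in> children V par e u. sub_optimal V par e R D v"
proof
  fix v assume "v \<in> children V par e u"
  then have v: "v \<in> V" "v \<noteq> e" "par v = u" unfolding children_def by auto
  show "sub_optimal V par e R D v"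
    unfolding sub_optimal_def window_def
  proof (intro allI impI, simp only: prod.case, rule impI, rule ccontr)
    fix D' assume D': "D' \<subseteq> V"
      and h: "path_number V par e R D' v = path_number V par e R D v \<and>
        card (D' \<inter> subtree V par e v) = card (D \<inter> subtree V par e v)"
      and "\<not> load V par e R D v \<le> load V par e R D' v"
    then have h3: "load V par e R D' v < load V par e R D v" by simp
    define D'' where "D'' = (D - subtree V par e v) \<union> (D' \<inter> subtree V par e v)"
    have "D'' \<subseteq> V \<and> path_number V par e R D'' u = path_number V par e R D u
      \<and> card (D'' \<inter> subtree V par e u) = card (D \<inter> subtree V par e u)
      \<and> load V par e R D'' u < load V par e R D u"
      unfolding D''_def
      using main_step[OF assms(1,2,4,5,6) D' v conjunct1[OF h] conjunct2[OF h] h3] by simp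
    note H = this
    have "D'' \<subseteq> V" using H by simp
    from \<open>D'' \<subseteq> V\<close> have W: "case window V par e R D u of (b, d, l) \<Rightarrow>
          case window V par e R D'' u of (b', d', l') \<Rightarrow> (b' = b \<and> d' = d \<longrightarrow> l \<le> l')"
      by (rule mp[OF spec[OF assms(7)[unfolded sub_optimal_def], of D'']])
    then have "path_number V par e R D'' u = path_number V par e R D u \<and>
        card (D'' \<inter> subtree V par e u) = card (D \<inter> subtree V par e u) \<longrightarrow>
        load V par e R D u \<le> load V par e R D'' u"
      unfolding window_def by simp
    with H show False by simp
  qed
qed

end
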